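(* Let $f:\mathbb{R}^N\times(0,T]\to\mathbb{R}^N$ be monotone in the sense that $(f(u,t)-f(v,t),u-v)\le 0$ for all $u,v\in\mathbb{R}^N$ and all $t$. Let $U$ and $V$ be the $\mathrm{mdG}(q)$ solutions of $\dot w=f(w,t)$ on $(0,T]$ with initial data $U(0^-)$ and $V(0^-)$ respectively, computed on the same partitions and with the same local degrees. Then at every synchronized time-level $\bar t$ (for instance $\bar t=T$), $$\|U(\bar t^-)-V(\bar t^-)\|\le \|U(0^-)-V(0^-)\|,$$ where $\|\cdot\|$ is the Euclidean norm and $(\cdot,\cdot)$ the Euclidean inner product.
   Context: Multi-adaptive discontinuous Galerkin method $\mathrm{mdG}(q)$ for $\dot w=f(w,t)$ on $(0,T]$ with $w(0^-)$ given: for each component $i=1,\dots,N$ one chooses a partition $0=t_{i0}<\dots<t_{iM_i}=T$, intervals $I_{ij}=(t_{i,j-1},t_{ij}]$ and degrees $q_{ij}\ge0$. The solution $W$ has $W_i|_{I_{ij}}\in\mathcal{P}^{q_{ij}}(I_{ij})$ (polynomials of degree $\le q_{ij}$; no continuity required across nodes), $W_i(0^-)$ given, and for all $i,j$ $$[W_i]_{i,j-1}\,v(t_{i,j-1}^+)+\int_{I_{ij}}\dot W_i\,v\,dt=\int_{I_{ij}}f_i(W(t),t)\,v\,dt\qquad\forall v\in\mathcal{P}^{q_{ij}}(I_{ij}),$$ where $[W_i]_{ij}=W_i(t_{ij}^+)-W_i(t_{ij}^-)$ and integrals are exact. A synchronized time-level is a time $\bar t\in(0,T]$ that is a partition node $t_{ij}$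 for every component $i$. *)

theory Defs
  imports "HOL-Analysis.Analysis" "HOL-Computational_Algebra.Polynomial"
begin

definition is_partition :: "real \<Rightarrow> nat \<Rightarrow> (nat \<Rightarrow> real) \<Rightarrow> bool" where
  "is_partition T M t \<longleftrightarrow> t 0 = 0 \<and> t M = T \<and> (\<forall>j<M. t j < t (Suc j))"

text \<open>Value of a piecewise polynomial (piece j lives on I_j = (t (j-1), t j], j = 1..M)
  at time s in (0,T].  At a node t k (k \<ge> 1) this is the left limit W(t_k^-).\<close>
definition dg_val :: "nat \<Rightarrow> (nat \<Rightarrow> real) \<Rightarrow> (nat \<Rightarrow> real poly) \<Rightarrow> real \<Rightarrow> real" where
  "dg_val M t P s = poly (P (THE j. 1 \<le> j \<and> j \<le> M \<and> t (j - 1) < s \<and> s \<le> t j)) s"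

definition dg_vec :: "('n \<Rightarrow> nat) \<Rightarrow> ('n \<Rightarrow> nat \<Rightarrow> real) \<Rightarrow> ('n \<Rightarrow> nat \<Rightarrow> real poly)
    \<Rightarrow> real \<Rightarrow> real ^ 'n" where
  "dg_vec M t P s = (\<chi> i. dg_val (M i) (t i) (P i) s)"

definition dg_left :: "real ^ 'n \<Rightarrow> ('n \<Rightarrow> nat \<Rightarrow> real) \<Rightarrow> ('n \<Rightarrow> nat \<Rightarrow> real poly)
    \<Rightarrow> 'n \<Rightarrow> nat \<Rightarrow> real" where
  "dg_left W0 t P i j = (if j = 1 then W0 $ i else poly (P i (j - 1)) (t i (j - 1)))"

definition is_mdG :: "(real ^ 'n \<Rightarrow> real \<Rightarrow> real ^ 'n) \<Rightarrow> ('n \<Rightarrow> nat) \<Rightarrow> ('n \<Rightarrow> nat \<Rightarrow> real)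
    \<Rightarrow> ('n \<Rightarrow> nat \<Rightarrow> nat) \<Rightarrow> real ^ 'n \<Rightarrow> ('n \<Rightarrow> nat \<Rightarrow> real poly) \<Rightarrow> bool" where
  "is_mdG f M t q W0 P \<longleftrightarrow>
     (\<forall>i. \<forall>j \<in> {1..M i}.
        degree (P i j) \<le> q i j \<and>
        (\<forall>v :: real poly. degree v \<le> q i j \<longrightarrow>
           (\<lambda>s. (f (dg_vec M t P s) s) $ i * poly v s) integrable_on {t i (j - 1) .. t i j} \<and>
           (poly (P i j) (t i (j - 1)) - dg_left W0 t P i j) * poly v (t i (j - 1))
             + integral {t i (j - 1) .. t i j} (\<lambda>s. poly (pderiv (P i j)) s * poly v s)
           = integral {t i (j - 1) .. t i j} (\<lambda>s. (f (dg_vec M t P s) s) $ i * poly v s)))"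

end

theory Submission
  imports Defs
begin

lemma part_mono:
  assumes "is_partition T M tt" "a < b" "b \<le> M"
  shows "tt a < tt b"
  using assms(2,3)
proof (induction b)
  case 0 then show ?case by simp
next
  case (Suc b)
  have s: "tt b < tt (Suc b)" using assms(1) Suc.prems unfolding is_partition_def by auto
  show ?case
  proof (cases "a = b")
    case True then show ?thesis using s by simp
  next
    case False then have "a < b" using Suc.prems by simp
    then show ?thesis using Suc.IH Suc.prems s by simp
  qed
qed

lemma part_le:
  assumes "is_partition T M tt" "a \<le> b" "b \<le> M"
  shows "tt a \<le> tt b"
  using part_mono[OF assms(1) _ assms(3), of a] assms(2) by (cases "a = b") auto

lemma dg_val_eq:
  assumes p: "is_partition T M tt" and j: "1 \<le> j" "j \<le> M" and s: "tt (j - 1) < s" "s \<le> tt j"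
  shows "dg_val M tt P s = poly (P j) s"
proof -
  have "(THE j. 1 \<le> j \<and> j \<le> M \<and> tt (j - 1) < s \<and> s \<le> tt j) = j"
  proof (rule the_equality)
    show "1 \<le> j \<and> j \<le> M \<and> tt (j - 1) < s \<and> s \<le> tt j" using j s by simp
  next
    fix j' assume h: "1 \<le> j' \<and> j' \<le> M \<and> tt (j' - 1) < s \<and> s \<le> tt j'"
    show "j' = j"
    proof (rule ccontr)
      assume "j' \<noteq> j"
      then consider "j' < j" | "j < j'" by linarith
      then show False
      proof cases
        case 1
        then have "tt j' \<le> tt (j - 1)" using part_le[OF p, of j' "j - 1"] j by simp
        then show False using h s by simp
      next
        case 2
        then have "tt j \<le> tt (j' - 1)" using part_le[OF p, of j "j' - 1"] h by linarith
        then show False using h s by simp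
      qed
    qed
  qed
  then show ?thesis unfolding dg_val_def by simp
qed

lemma ftc_poly:
  fixes E :: "real poly"
  assumes "a \<le> b"
  shows "integral {a..b} (\<lambda>s. poly (pderiv E) s * poly E s) = (poly E b ^ 2 - poly E a ^ 2) / 2"
proof -
  have "((\<lambda>s. poly (pderiv E) s * poly E s) has_integral
        ((\<lambda>s. poly E s ^ 2 / 2) b - (\<lambda>s. poly E s ^ 2 / 2) a)) {a..b}"
  proof (rule fundamental_theorem_of_calculus[OF assms])
    fix x assume "x \<in> {a..b}"
    have "((\<lambda>s. poly E s ^ 2 / 2) has_real_derivative poly (pderiv E) x * poly E x) (at x)"
      by (rule derivative_eq_intros poly_DERIV refl | simp)+
    then show "((\<lambda>s. poly E s ^ 2 / 2) has_vector_derivative poly (pderiv E) x * poly E x) (at x within {a..b})"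
      using has_real_derivative_iff_has_vector_derivative has_vector_derivative_at_within by blast
  qed
  then show ?thesis by (simp add: integral_unique diff_divide_distrib)
qed

lemma poly_integrable: "(\<lambda>s. poly p s * poly r s) integrable_on {a..b::real}"
  by (intro integrable_continuous_interval continuous_intros)

lemma interval_ineq:
  fixes hU hV uval vval :: "real \<Rightarrow> real" and pU pV :: "real poly" and a b lU lV :: real
  assumes ab: "a < b"
    and eqU: "\<forall>v :: real poly. degree v \<le> qq \<longrightarrow>
           (\<lambda>s. hU s * poly v s) integrable_on {a..b} \<and>
           (poly pU a - lU) * poly v a + integral {a..b} (\<lambda>s. poly (pderiv pU) s * poly v s)
           = integral {a..b} (\<lambda>s. hU s * poly v s)"
    and eqV: "\<forall>v :: real poly. degree v \<le> qq \<longrightarrow>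
           (\<lambda>s. hV s * poly v s) integrable_on {a..b} \<and>
           (poly pV a - lV) * poly v a + integral {a..b} (\<lambda>s. poly (pderiv pV) s * poly v s)
           = integral {a..b} (\<lambda>s. hV s * poly v s)"
    and dU: "degree pU \<le> qq" and dV: "degree pV \<le> qq"
    and uv: "\<And>s. s \<in> {a<..b} \<Longrightarrow> uval s = poly pU s"
    and vv: "\<And>s. s \<in> {a<..b} \<Longrightarrow> vval s = poly pV s"
  shows "(\<lambda>s. (hU s - hV s) * (uval s - vval s)) integrable_on {a..b} \<and>
         (poly pU b - poly pV b) ^ 2 - (lU - lV) ^ 2
           \<le> 2 * integral {a..b} (\<lambda>s. (hU s - hV s) * (uval s - vval s))"
proof -
  define E where "E = pU - pV"
  have dE: "degree E \<le> qq" unfolding E_def using dU dV degree_diff_le by blast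
  from eqU dE have iU: "(\<lambda>s. hU s * poly E s) integrable_on {a..b}"
    and EU: "(poly pU a - lU) * poly E a + integral {a..b} (\<lambda>s. poly (pderiv pU) s * poly E s)
           = integral {a..b} (\<lambda>s. hU s * poly E s)" by auto
  from eqV dE have iV: "(\<lambda>s. hV s * poly E s) integrable_on {a..b}"
    and EV: "(poly pV a - lV) * poly E a + integral {a..b} (\<lambda>s. poly (pderiv pV) s * poly E s)
           = integral {a..b} (\<lambda>s. hV s * poly E s)" by auto
  define G where "G = (\<lambda>s. hU s * poly E s - hV s * poly E s)"
  have iG: "G integrable_on {a..b}" unfolding G_def using iU iV by (rule integrable_diff)
  have IG: "integral {a..b} G = integral {a..b} (\<lambda>s. hU s * poly E s) - integral {a..b} (\<lambda>s. hV s * poly E s)"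
    unfolding G_def using iU iV by (rule integral_diff)
  have eqg: "\<And>s. s \<in> {a..b} - {a} \<Longrightarrow> (hU s - hV s) * (uval s - vval s) = G s"
    using uv vv by (auto simp: G_def E_def algebra_simps)
  have ig: "(\<lambda>s. (hU s - hV s) * (uval s - vval s)) integrable_on {a..b}"
    by (rule integrable_spike[OF iG negligible_sing eqg])
  have Ig: "integral {a..b} (\<lambda>s. (hU s - hV s) * (uval s - vval s)) = integral {a..b} G"
    by (rule integral_spike[OF negligible_sing[of a]]) (use eqg in auto)
  have D: "integral {a..b} (\<lambda>s. poly (pderiv pU) s * poly E s) - integral {a..b} (\<lambda>s. poly (pderiv pV) s * poly E s)
        = integral {a..b} (\<lambda>s. poly (pderiv E) s * poly E s)"
    by (subst integral_diff[symmetric], (rule poly_integrable)+) (simp add: E_def pderiv_diff algebra_simps)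
  have F: "integral {a..b} (\<lambda>s. poly (pderiv E) s * poly E s) = (poly E b ^ 2 - poly E a ^ 2) / 2"
    using ab by (intro ftc_poly) simp
  define x where "x = poly E a"
  define y where "y = poly E b"
  define e where "e = lU - lV"
  have xa: "x = poly pU a - poly pV a" unfolding x_def E_def by simp
  define A1 where "A1 = integral {a..b} (\<lambda>s. poly (pderiv pU) s * poly E s)"
  define A2 where "A2 = integral {a..b} (\<lambda>s. poly (pderiv pV) s * poly E s)"
  define B1 where "B1 = integral {a..b} (\<lambda>s. hU s * poly E s)"
  define B2 where "B2 = integral {a..b} (\<lambda>s. hV s * poly E s)"
  have EU': "(poly pU a - lU) * x + A1 = B1" using EU unfolding A1_def B1_def x_def .
  have EV': "(poly pV a - lV) * x + A2 = B2" using EV unfolding A2_def B2_def x_def .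
  have DF: "A1 - A2 = (y ^ 2 - x ^ 2) / 2" using D F unfolding A1_def A2_def x_def y_def by simp
  have IG': "integral {a..b} G = B1 - B2" using IG unfolding B1_def B2_def .
  have key: "(x - e) * x + (y ^ 2 - x ^ 2) / 2 = integral {a..b} G"
  proof -
    have h: "(poly pU a - lU) * x - (poly pV a - lV) * x = (x - e) * x"
      unfolding xa e_def by (simp add: algebra_simps)
    show ?thesis using EU' EV' DF IG' h by linarith
  qed
  have "y ^ 2 - e ^ 2 = 2 * integral {a..b} G - (x - e) ^ 2"
    using key by (simp add: algebra_simps power2_eq_square field_simps)
  moreover have "(x - e) ^ 2 \<ge> 0" by simp
  ultimately have "y ^ 2 - e ^ 2 \<le> 2 * integral {a..b} G" by linarith
  then show ?thesis using ig Ig unfolding y_def e_def E_def by simp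
qed


theorem theorem5p2:
  fixes f :: "real ^ 'n \<Rightarrow> real \<Rightarrow> real ^ 'n"
    and T :: real and M :: "'n \<Rightarrow> nat" and t :: "'n \<Rightarrow> nat \<Rightarrow> real"
    and q :: "'n \<Rightarrow> nat \<Rightarrow> nat"
    and U0 V0 :: "real ^ 'n" and PU PV :: "'n \<Rightarrow> nat \<Rightarrow> real poly"
    and tbar :: real
  assumes T_pos: "0 < T"
    and part: "\<And>i. is_partition T (M i) (t i)"
    and mono: "\<And>u v s. s \<in> {0<..T} \<Longrightarrow> (f u s - f v s) \<bullet> (u - v) \<le> 0"
    and U: "is_mdG f M t q U0 PU"
    and V: "is_mdG f M t q V0 PV"
    and tbar: "tbar \<in> {0<..T}"
    and sync: "\<And>i. \<exists>k \<le> M i. t i k = tbar"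
  shows "norm (dg_vec M t PU tbar - dg_vec M t PV tbar) \<le> norm (U0 - V0)"
proof -
  define g where "g = (\<lambda>i s. (f (dg_vec M t PU s) s $ i - f (dg_vec M t PV s) s $ i)
       * (dg_vec M t PU s $ i - dg_vec M t PV s $ i))"
  define D where "D = (\<lambda>i k. if k = 0 then U0 $ i - V0 $ i
       else poly (PU i k) (t i k) - poly (PV i k) (t i k))"
  have t0: "t i 0 = 0" for i using part[of i] unfolding is_partition_def by simp
  have step: "g i integrable_on {t i (j - 1) .. t i j} \<and>
      D i j ^ 2 - D i (j - 1) ^ 2 \<le> 2 * integral {t i (j - 1) .. t i j} (g i)"
    if j: "1 \<le> j" "j \<le> M i" for i j
  proof -
    have ab: "t i (j - 1) < t i j" using part_mono[OF part[of i], of "j - 1" j] j by simp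
    have Dj: "D i j = poly (PU i j) (t i j) - poly (PV i j) (t i j)" using j by (simp add: D_def)
    have Dj1: "D i (j - 1) = dg_left U0 t PU i j - dg_left V0 t PV i j"
      using j by (cases "j = 1") (auto simp: D_def dg_left_def)
    from U j have Ui: "degree (PU i j) \<le> q i j \<and>
        (\<forall>v :: real poly. degree v \<le> q i j \<longrightarrow>
           (\<lambda>s. (f (dg_vec M t PU s) s) $ i * poly v s) integrable_on {t i (j - 1) .. t i j} \<and>
           (poly (PU i j) (t i (j - 1)) - dg_left U0 t PU i j) * poly v (t i (j - 1))
             + integral {t i (j - 1) .. t i j} (\<lambda>s. poly (pderiv (PU i j)) s * poly v s)
           = integral {t i (j - 1) .. t i j} (\<lambda>s. (f (dg_vec M t PU s) s) $ i * poly v s))"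
      unfolding is_mdG_def by auto
    from V j have Vi: "degree (PV i j) \<le> q i j \<and>
        (\<forall>v :: real poly. degree v \<le> q i j \<longrightarrow>
           (\<lambda>s. (f (dg_vec M t PV s) s) $ i * poly v s) integrable_on {t i (j - 1) .. t i j} \<and>
           (poly (PV i j) (t i (j - 1)) - dg_left V0 t PV i j) * poly v (t i (j - 1))
             + integral {t i (j - 1) .. t i j} (\<lambda>s. poly (pderiv (PV i j)) s * poly v s)
           = integral {t i (j - 1) .. t i j} (\<lambda>s. (f (dg_vec M t PV s) s) $ i * poly v s))"
      unfolding is_mdG_def by auto
    have uv: "dg_vec M t PU s $ i = poly (PU i j) s" if "s \<in> {t i (j - 1)<..t i j}" for s
      using dg_val_eq[OF part[of i] j, of s "PU i"] that by (simp add: dg_vec_def)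
    have vv: "dg_vec M t PV s $ i = poly (PV i j) s" if "s \<in> {t i (j - 1)<..t i j}" for s
      using dg_val_eq[OF part[of i] j, of s "PV i"] that by (simp add: dg_vec_def)
    have "(\<lambda>s. (f (dg_vec M t PU s) s $ i - f (dg_vec M t PV s) s $ i) *
              (dg_vec M t PU s $ i - dg_vec M t PV s $ i)) integrable_on {t i (j - 1) .. t i j} \<and>
         (poly (PU i j) (t i j) - poly (PV i j) (t i j)) ^ 2
           - (dg_left U0 t PU i j - dg_left V0 t PV i j) ^ 2
           \<le> 2 * integral {t i (j - 1) .. t i j} (\<lambda>s. (f (dg_vec M t PU s) s $ i - f (dg_vec M t PV s) s $ i) *
              (dg_vec M t PU s $ i - dg_vec M t PV s $ i))"
      by (rule interval_ineq[OF ab _ _ _ _ uv vv]) (use Ui Vi in auto)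
    then show ?thesis unfolding g_def Dj Dj1 .
  qed
  have tele: "g i integrable_on {0 .. t i k} \<and> D i k ^ 2 - D i 0 ^ 2 \<le> 2 * integral {0 .. t i k} (g i)"
    if "k \<le> M i" for i k
    using that
  proof (induction k)
    case 0 then show ?case using t0[of i] integrable_on_refl[of "g i" 0] by simp
  next
    case (Suc k)
    have IH: "g i integrable_on {0 .. t i k}" "D i k ^ 2 - D i 0 ^ 2 \<le> 2 * integral {0 .. t i k} (g i)"
      using Suc by auto
    have S: "g i integrable_on {t i k .. t i (Suc k)}"
         "D i (Suc k) ^ 2 - D i k ^ 2 \<le> 2 * integral {t i k .. t i (Suc k)} (g i)"
      using step[of "Suc k" i] Suc.prems by auto
    have le1: "0 \<le> t i k" using part_le[OF part[of i], of 0 k] Suc.prems t0[of i] by simp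
    have le2: "t i k \<le> t i (Suc k)" using part_le[OF part[of i], of k "Suc k"] Suc.prems by simp
    have I: "g i integrable_on {0 .. t i (Suc k)}"
      by (rule Henstock_Kurzweil_Integration.integrable_combine[OF le1 le2 IH(1) S(1)])
    have "integral {0..t i k} (g i) + integral {t i k..t i (Suc k)} (g i) = integral {0..t i (Suc k)} (g i)"
      by (rule Henstock_Kurzweil_Integration.integral_combine[OF le1 le2 I])
    then show ?case using I IH(2) S(2) by linarith
  qed
  obtain kk where kk: "\<And>i. kk i \<le> M i \<and> t i (kk i) = tbar" using sync by metis
  have kk1: "1 \<le> kk i" for i
  proof (rule ccontr)
    assume "\<not> 1 \<le> kk i" then have "kk i = 0" by simp
    then show False using kk[of i] t0[of i] tbar by auto
  qed
  have comp: "(dg_vec M t PU tbar - dg_vec M t PV tbar) $ i = D i (kk i)" for i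
  proof -
    have a: "t i (kk i - 1) < tbar" using part_mono[OF part[of i], of "kk i - 1" "kk i"] kk[of i] kk1[of i] by simp
    have "dg_vec M t PU tbar $ i = poly (PU i (kk i)) (t i (kk i))"
      using dg_val_eq[OF part[of i] kk1[of i], of tbar "PU i"] kk[of i] a by (simp add: dg_vec_def)
    moreover have "dg_vec M t PV tbar $ i = poly (PV i (kk i)) (t i (kk i))"
      using dg_val_eq[OF part[of i] kk1[of i], of tbar "PV i"] kk[of i] a by (simp add: dg_vec_def)
    ultimately show ?thesis using kk1[of i] by (simp add: D_def)
  qed
  have int_i: "g i integrable_on {0..tbar}" and ineq_i: "D i (kk i) ^ 2 - D i 0 ^ 2 \<le> 2 * integral {0..tbar} (g i)" for i
    using tele[of "kk i" i] kk[of i] by auto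
  define F where "F = (\<lambda>s. \<Sum>i\<in>UNIV. g i s)"
  have Fint: "F integrable_on {0..tbar}" unfolding F_def by (rule integrable_sum) (use int_i in auto)
  have IF: "integral {0..tbar} F = (\<Sum>i\<in>UNIV. integral {0..tbar} (g i))"
    unfolding F_def by (rule integral_sum) (use int_i in auto)
  define F' where "F' = (\<lambda>s. if s = 0 then 0 else F s)"
  have eqF: "\<And>s. s \<in> {0..tbar} - {0} \<Longrightarrow> F' s = F s" unfolding F'_def by auto
  have F'int: "F' integrable_on {0..tbar}" by (rule integrable_spike[OF Fint negligible_sing eqF])
  have IF': "integral {0..tbar} F = integral {0..tbar} F'"
    by (rule integral_spike[OF negligible_sing[of 0]]) (use eqF in auto)
  have Fs: "F s = (f (dg_vec M t PU s) s - f (dg_vec M t PV s) s) \<bullet> (dg_vec M t PU s - dg_vec M t PV s)" for s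
    unfolding F_def g_def inner_vec_def by simp
  have F'le: "F' s \<le> 0" if "s \<in> {0..tbar}" for s
  proof (cases "s = 0")
    case True then show ?thesis by (simp add: F'_def)
  next
    case False then have "s \<in> {0<..T}" using that tbar by auto
    then show ?thesis using mono[of s] False by (simp add: F'_def Fs)
  qed
  have "integral {0..tbar} F' \<le> integral {0..tbar} (\<lambda>s. 0::real)"
    by (rule integral_le[OF F'int]) (use F'le in auto)
  then have Fneg: "integral {0..tbar} F \<le> 0" using IF' by simp
  have "(\<Sum>i\<in>UNIV. D i (kk i) ^ 2 - D i 0 ^ 2) \<le> (\<Sum>i\<in>UNIV. 2 * integral {0..tbar} (g i))"
    by (rule sum_mono) (use ineq_i in auto)
  also have "\<dots> = 2 * integral {0..tbar} F" using IF by (simp add: sum_distrib_left)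
  also have "\<dots> \<le> 0" using Fneg by simp
  finally have "(\<Sum>i\<in>UNIV. D i (kk i) ^ 2) \<le> (\<Sum>i\<in>UNIV. D i 0 ^ 2)"
    by (simp add: sum_subtractf)
  moreover have "norm (dg_vec M t PU tbar - dg_vec M t PV tbar) ^ 2 = (\<Sum>i\<in>UNIV. D i (kk i) ^ 2)"
    unfolding power2_norm_eq_inner inner_vec_def using comp by (simp add: power2_eq_square)
  moreover have "norm (U0 - V0) ^ 2 = (\<Sum>i\<in>UNIV. D i 0 ^ 2)"
    unfolding power2_norm_eq_inner inner_vec_def by (simp add: D_def power2_eq_square)
  ultimately have "norm (dg_vec M t PU tbar - dg_vec M t PV tbar) ^ 2 \<le> norm (U0 - V0) ^ 2" by simp
  then show ?thesis by (rule power2_le_imp_le) simp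
qed

end
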